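(* Consider Janus Quicksort (JQuick), as described in the context, run on $n$ elements with distinct keys distributed over $p$ processes with $n/p$ elements each. With probability $1-O(p^{-6})$, JQuick executes only $O(\log p)$ distributed levels of recursion (equivalently, it executes more than $O(\log p)$ distributed levels of recursion with probability $O(p^{-6})$).
   Context: Janus Quicksort (JQuick) is a recursive distributed-memory sorting algorithm. The input is $n$ elements with pairwise distinct keys, distributed over $p$ processes numbered $0,\dots,p-1$ with exactly $n/p$ elements per process ($n$ a multiple of $p$). The algorithm maintains tasks; a task is a contiguous range of processes together with a contiguous range of the global sorted order of elements that these processes jointly hold, every process holding exactly $n/p$ elements in total, summed over all tasks it belongs to. A process may belong to two tasks at once (a "janus process"), and it then processes both simultaneously. One distributed level of recursion on a task performs four steps: (1) pivot selection: an element of the task chosen uniformly at random is broadcast to all processes of the task; (2) partitioning: each process splits its elements of the task into small elements (smaller than the pivot) and large elements (at least the pivot); (3) data assignment: using prefix sums and broadcasts, the small elements are assigned to a left group consisting of an initial segment of the task's processes and the large elements to a right group consisting of a final segment, such that every process again holds exactly $n/p$ elements in total; the two groups share at most one process (a janus process); (4) data exchange: elements are sent to their assigned processes. Then the left group recursively sorts the small elements and the right group the large elements. A task covering only one or two processes is a base case; base cases are not split further but sorted in a second phase. The number of distributed levels of recursion is the depth of this recursion (excluding the base-case phase). *)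

theory Defs
  imports "HOL-Probability.Probability_Mass_Function"
begin

text \<open>Distinct keys are identified with their global ranks
  0..n-1. Global sorted position (slot) k belongs to process k div m, where m = n/p is
  the number of elements per process. A task is the contiguous rank range [a,b); it is
  held by the processes owning slots a..b-1 (consecutive, the border ones possibly janus
  processes). The number of processes of a nonempty task [a,b) is
  (b-1) div m - a div m + 1.\<close>

definition jq_nprocs :: "nat \<Rightarrow> nat \<Rightarrow> nat \<Rightarrow> nat" where
  "jq_nprocs m a b = (if b \<le> a then 0 else (b - 1) div m - a div m + 1)"

definition jq_base :: "nat \<Rightarrow> nat \<Rightarrow> nat \<Rightarrow> bool" where
  "jq_base m a b \<longleftrightarrow> jq_nprocs m a b \<le> 2"

text \<open>jq_exceeds d m a b: distribution of the event that the recursion started on task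
  [a,b) executes more than d distributed levels. One level on a non-base task: the pivot
  rank r is uniform in [a,b); the small elements [a,r) go to the left group (no task if
  empty), the large elements [r,b) to the right group; both subtasks recurse with
  independent randomness.\<close>
primrec jq_exceeds :: "nat \<Rightarrow> nat \<Rightarrow> nat \<Rightarrow> nat \<Rightarrow> bool pmf" where
  "jq_exceeds 0 m a b = return_pmf (\<not> jq_base m a b)"
| "jq_exceeds (Suc d) m a b =
     (if jq_base m a b then return_pmf False
      else bind_pmf (pmf_of_set {a..<b}) (\<lambda>r.
             bind_pmf (if a < r then jq_exceeds d m a r else return_pmf False) (\<lambda>x.
             bind_pmf (jq_exceeds d m r b) (\<lambda>y. return_pmf (x \<or> y)))))"

definition jq_depth_exceeds_prob :: "nat \<Rightarrow> nat \<Rightarrow> nat \<Rightarrow> real" where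
  "jq_depth_exceeds_prob n p d = measure_pmf.prob (jq_exceeds d (n div p) 0 n) {True}"

end

theory Submission
  imports Defs
begin

lemma nonbase_size:
  assumes "m \<ge> 1" "\<not> jq_base m a b" shows "a < b" "b - a > m"
proof -
  show ab: "a < b" using assms unfolding jq_base_def jq_nprocs_def by (auto split: if_splits)
  have "(b - 1) div m \<ge> a div m + 2" using assms ab unfolding jq_base_def jq_nprocs_def by auto
  hence "m * ((b - 1) div m) \<ge> m * (a div m) + 2 * m" by (metis add_mult_distrib2 mult.commute mult_le_mono2)
  moreover have "m * ((b - 1) div m) \<le> b - 1" by simp
  moreover have "a < m * (a div m) + m"
    by (metis add.commute assms(1) div_mult_mod_eq le_add1 mod_less_divisor mult.commute nat_add_left_cancel_less order_less_le_trans zero_less_one)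
  ultimately show "b - a > m" by linarith
qed

lemma or_bound:
  fixes A B :: "bool pmf"
  shows "pmf (bind_pmf A (\<lambda>x. bind_pmf B (\<lambda>y. return_pmf (x \<or> y)))) True \<le> pmf A True + pmf B True"
proof -
  have e: "pmf (bind_pmf A (\<lambda>x. bind_pmf B (\<lambda>y. return_pmf (x \<or> y)))) True
     = (\<Sum>x\<in>UNIV. pmf (bind_pmf B (\<lambda>y. return_pmf (x \<or> y))) True * pmf A x)"
    unfolding pmf_bind by (rule integral_measure_pmf_real) auto
  have t: "pmf (bind_pmf B (\<lambda>y. return_pmf (True \<or> y))) True = 1" by simp
  have f: "pmf (bind_pmf B (\<lambda>y. return_pmf (False \<or> y))) True = pmf B True" by (simp add: bind_return_pmf')
  have "pmf (bind_pmf A (\<lambda>x. bind_pmf B (\<lambda>y. return_pmf (x \<or> y)))) True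
      = pmf A True + pmf B True * pmf A False" unfolding e UNIV_bool using t f by simp
  also have "\<dots> \<le> pmf A True + pmf B True"
    using pmf_le_1[of A False] pmf_nonneg[of B True] by (simp add: mult_left_le)
  finally show ?thesis .
qed

lemma sq_sum: "(\<Sum>j<s. real j ^ 2 + real (Suc j) ^ 2) = (2 * real s ^ 3 + real s) / 3"
  by (induction s) (simp_all add: power2_eq_square power3_eq_cube field_simps)

lemma sum_ident:
  assumes "a \<le> b"
  shows "(\<Sum>r\<in>{a..<b}. real (r - a) ^ 2 + real (b - r) ^ 2) = (2 * real (b - a) ^ 3 + real (b-a)) / 3"
proof -
  define s where "s = b - a"
  have b: "b = s + a" using assms s_def by simp
  have "(\<Sum>r\<in>{a..<b}. real (r - a) ^ 2 + real (b - r) ^ 2) = (\<Sum>i\<in>{0..<s}. real i ^ 2 + real (s - i) ^ 2)"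
    unfolding b using sum.shift_bounds_nat_ivl[of "\<lambda>r. real (r - a) ^ 2 + real (s + a - r) ^ 2" 0 a s]
    by simp
  also have "\<dots> = (\<Sum>i<s. real i ^ 2) + (\<Sum>i<s. real (s - i) ^ 2)"
    by (simp add: sum.distrib atLeast0LessThan)
  also have "(\<Sum>i<s. real (s - i) ^ 2) = (\<Sum>i<s. real (Suc (s - Suc i)) ^ 2)"
    by (rule sum.cong) (auto simp: Suc_diff_Suc)
  also have "\<dots> = (\<Sum>i<s. real (Suc i) ^ 2)"
    using sum.nat_diff_reindex[of "\<lambda>i. real (Suc i) ^ 2" s] by simp
  finally show ?thesis using sq_sum[of s] by (simp add: sum.distrib s_def)
qed

lemma main_bound:
  assumes m: "m \<ge> 1"
  shows "pmf (jq_exceeds d m a b) True \<le> real (b - a) ^ 2 / real m ^ 2 * (3/4) ^ d"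
proof (induction d arbitrary: a b)
  case 0
  show ?case
  proof (cases "jq_base m a b")
    case True then show ?thesis by simp
  next
    case False
    hence "b - a > m" using nonbase_size[OF m] by auto
    hence "real m ^ 2 \<le> real (b - a) ^ 2" by (intro power_mono) auto
    hence "1 \<le> real (b - a) ^ 2 / real m ^ 2" using m by simp
    then show ?thesis using False by simp
  qed
next
  case (Suc d)
  show ?case
  proof (cases "jq_base m a b")
    case True then show ?thesis by simp
  next
    case False
    have ab: "a < b" and sm: "b - a > m" using nonbase_size[OF m False] by auto
    define q :: real where "q = (3/4) ^ d / real m ^ 2"
    have q0: "q \<ge> 0" unfolding q_def by simp
    define s where "s = b - a"
    have s2: "real s \<ge> 2" using sm m s_def by simp
    define f where "f = (\<lambda>r. bind_pmf (if a < r then jq_exceeds d m a r else return_pmf False) (\<lambda>x.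
             bind_pmf (jq_exceeds d m r b) (\<lambda>y. return_pmf (x \<or> y))))"
    have eq: "pmf (jq_exceeds (Suc d) m a b) True = (\<Sum>r\<in>{a..<b}. pmf (f r) True) / real s"
      using False ab unfolding f_def s_def by (simp add: pmf_bind_pmf_of_set)
    have fb: "pmf (f r) True \<le> (real (r - a) ^ 2 + real (b - r) ^ 2) * q" for r
    proof -
      have L: "pmf (if a < r then jq_exceeds d m a r else return_pmf False) True \<le> real (r - a) ^ 2 * q"
        using Suc.IH[of a r] q0 by (auto simp: q_def)
      have R: "pmf (jq_exceeds d m r b) True \<le> real (b - r) ^ 2 * q"
        using Suc.IH[of r b] by (simp add: q_def)
      have "pmf (f r) True \<le> pmf (if a < r then jq_exceeds d m a r else return_pmf False) True + pmf (jq_exceeds d m r b) True"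
        unfolding f_def by (rule or_bound)
      thus ?thesis using L R by (simp add: distrib_right)
    qed
    have "(\<Sum>r\<in>{a..<b}. pmf (f r) True) \<le> (\<Sum>r\<in>{a..<b}. (real (r - a) ^ 2 + real (b - r) ^ 2) * q)"
      by (rule sum_mono) (rule fb)
    also have "\<dots> = (\<Sum>r\<in>{a..<b}. real (r - a) ^ 2 + real (b - r) ^ 2) * q"
      by (simp add: sum_distrib_right)
    also have "\<dots> = (2 * real s ^ 3 + real s) / 3 * q"
      using sum_ident[of a b] ab s_def by simp
    also have "\<dots> \<le> (3/4) * real s ^ 3 * q"
    proof (rule mult_right_mono[OF _ q0])
      have "2 * 2 \<le> real s * real s" using s2 by (intro mult_mono) auto
      hence "4 \<le> real s ^ 2" by (simp add: power2_eq_square)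
      hence "4 * real s \<le> real s ^ 2 * real s" using s2 by (intro mult_right_mono) auto
      thus "(2 * real s ^ 3 + real s) / 3 \<le> 3 / 4 * real s ^ 3" by (simp add: power3_eq_cube power2_eq_square)
    qed
    finally have "(\<Sum>r\<in>{a..<b}. pmf (f r) True) / real s \<le> (3/4) * real s ^ 3 * q / real s"
      using s2 by (intro divide_right_mono) auto
    also have "\<dots> = real s ^ 2 / real m ^ 2 * (3/4) ^ Suc d"
      using s2 unfolding q_def by (simp add: power3_eq_cube power2_eq_square field_simps)
    finally show ?thesis using eq s_def by simp
  qed
qed

theorem lemma2:
  "\<exists>C::real. C > 0 \<and> (\<exists>K::real. \<forall>p n::nat. 1 \<le> p \<and> 0 < n \<and> p dvd n \<longrightarrow>
      jq_depth_exceeds_prob n p (nat \<lceil>C * ln (real p)\<rceil>) \<le> K * real p powr (-6))"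
proof (intro exI conjI allI impI)
  show "(40::real) > 0" by simp
  fix p n :: nat
  assume h: "1 \<le> p \<and> 0 < n \<and> p dvd n"
  define m where "m = n div p"
  have nm: "n = p * m" using h m_def by auto
  have m1: "m \<ge> 1" using h nm by (cases m) auto
  define d where "d = nat \<lceil>40 * ln (real p)\<rceil>"
  have lp: "ln (real p) \<ge> 0" using h by simp
  have dge: "real d \<ge> 40 * ln (real p)" unfolding d_def by linarith
  have "jq_depth_exceeds_prob n p d = pmf (jq_exceeds d m 0 n) True"
    unfolding jq_depth_exceeds_prob_def m_def by (simp add: measure_pmf_single)
  also have "\<dots> \<le> real n ^ 2 / real m ^ 2 * (3/4) ^ d" using main_bound[OF m1, of d 0 n] by simp
  also have "real n ^ 2 / real m ^ 2 = real p ^ 2" using nm m1 by (simp add: power_mult_distrib)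
  finally have A: "jq_depth_exceeds_prob n p d \<le> real p ^ 2 * (3/4) ^ d" .
  have B: "(3/4::real) ^ d = exp (real d * ln (3/4))"
    by (simp add: powr_def powr_realpow[symmetric] mult.commute)
  have C: "exp (real d * ln (3/4)) \<le> exp (- 8 * ln (real p))"
  proof -
    have l: "ln (3/4::real) \<le> -1/4" using ln_le_minus_one[of "3/4::real"] by simp
    have "real d * ln (3/4) \<le> real d * (-1/4)" using l by (intro mult_left_mono) auto
    also have "\<dots> \<le> - 8 * ln (real p)" using dge lp by linarith
    finally show ?thesis by simp
  qed
  have D: "exp (- 8 * ln (real p)) = real p powr (-8)" using h by (simp add: powr_def)
  have "jq_depth_exceeds_prob n p d \<le> real p ^ 2 * real p powr (-8)"
    using A B C D by (smt (verit) mult_left_mono zero_le_power2)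
  also have "real p ^ 2 = real p powr 2" using h by (simp add: powr_realpow)
  also have "real p powr 2 * real p powr (-8) = 1 * real p powr (-6)"
    using h by (subst powr_add[symmetric]) simp
  finally show "jq_depth_exceeds_prob n p (nat \<lceil>40 * ln (real p)\<rceil>) \<le> 1 * real p powr (-6)"
    unfolding d_def .
qed

end
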